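(* For every $n\ge1$ and every $A\subseteq[1;n]$ one has $\Lambda_A=\widehat{\Lambda}_A$ in $U_q(\mathfrak{sl}_2)^{\otimes n}$.
   Context: Let $\mathbb{K}$ be a field and $q\in\mathbb{K}$ not a root of unity. $U_q(\mathfrak{sl}_2)$ is the associative $\mathbb{K}$-algebra with generators $E,F,K,K^{-1}$ and relations $KK^{-1}=K^{-1}K=1$, $KE=q^2EK$, $KF=q^{-2}FK$, $EF-FE=\frac{K-K^{-1}}{q-q^{-1}}$, with Casimir element $\Lambda=(q-q^{-1})^2EF+q^{-1}K+qK^{-1}$ and coproduct $\Delta(E)=E\otimes1+K\otimes E$, $\Delta(F)=F\otimes K^{-1}+1\otimes F$, $\Delta(K^{\pm1})=K^{\pm1}\otimes K^{\pm1}$. $\mathcal{I}_R$ is the subalgebra generated by $EK^{-1},F,K^{-1},\Lambda$, with algebra morphism $\tau_R:\mathcal{I}_R\to U_q(\mathfrak{sl}_2)\otimes\mathcal{I}_R$: $\tau_R(EK^{-1})=K^{-1}\otimes EK^{-1}$, $\tau_R(F)=K\otimes F-q^{-3}(q-q^{-1})^2F^2K\otimes EK^{-1}+q^{-1}(q+q^{-1})FK\otimes K^{-1}-q^{-1}FK\otimes\Lambda$, $\tau_R(K^{-1})=1\otimes K^{-1}-q^{-1}(q-q^{-1})^2F\otimes EK^{-1}$, $\tau_R(\Lambda)=1\otimes\Lambda$. $\mathcal{I}_L$ is the subalgebra generated by $E,FK,K,\Lambda$, with algebra morphism $\tau_L:\mathcal{I}_L\to\mathcal{I}_L\otimes U_q(\mathfrak{sl}_2)$: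 $\tau_L(E)=E\otimes K$, $\tau_L(FK)=FK\otimes K^{-1}-q^{-1}(q-q^{-1})^2E\otimes F^2K+q(q+q^{-1})K\otimes F-q\Lambda\otimes F$, $\tau_L(K)=K\otimes1-q^{-1}(q-q^{-1})^2E\otimes FK$, $\tau_L(\Lambda)=\Lambda\otimes1$. $[i;j]=\{i,\dots,j\}$; $1^{\otimes\ell}\otimes\varphi\otimes1^{\otimes m}$ applies $\varphi$ to tensor position $\ell+1$. Set $\Lambda_\varnothing=\widehat\Lambda_\varnothing=q+q^{-1}$. For $A=\{a_1<\dots<a_m\}\subseteq[1;n]$: (right extension) $\Lambda_A=1^{\otimes(a_1-1)}\otimes(\mu_m\circ\cdots\circ\mu_2)(\Lambda)\otimes1^{\otimes(n-a_m)}$ with $\mu_i=(1^{\otimes(a_i-a_1-1)}\otimes\tau_R)\circ\cdots\circ(1^{\otimes(a_{i-1}-a_1+1)}\otimes\tau_R)\circ(1^{\otimes(a_{i-1}-a_1)}\otimes\Delta)$; (left extension) $\widehat{\Lambda}_A=1^{\otimes(a_1-1)}\otimes(\widehat\mu_1\circ\widehat\mu_2\circ\cdots\circ\widehat\mu_{m-1})(\Lambda)\otimes1^{\otimes(n-a_m)}$ with $\widehat\mu_i=(\tau_L\otimes1^{\otimes(a_m-a_i-1)})\circ\cdots\circ(\tau_L\otimes1^{\otimes(a_m-a_{i+1}+1)})\circ(\Delta\otimes1^{\otimes(a_m-a_{i+1})})$. In both, the $\tau_R$ (resp. $\tau_L$) factors are absent when consecutive elements of $A$ differ by $1$; the compositions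 are well defined. *)

theory Defs
  imports Main
begin

text \<open>
  Elements of the tensor power of U_q(sl_2) are represented by noncommutative polynomial
  expressions in generators placed in tensor slots (slot i = i-th tensor factor, 1-based).
  Besides E, F, K, K^-1 we have named generators for the derived elements E K^-1, F K and the
  Casimir Lambda, so that the subalgebras I_R (generated by E K^-1, F, K^-1, Lambda) and
  I_L (generated by E, F K, K, Lambda) can be addressed syntactically.
\<close>

datatype gen = GE | GF | GK | GKi | GEKi | GFK | GLam

datatype 'k uexp = Sc 'k | G nat gen | Add "'k uexp" "'k uexp" | Mul "'k uexp" "'k uexp"

definition sumE :: "'k::zero uexp list \<Rightarrow> 'k uexp" where
  "sumE xs = foldr Add xs (Sc 0)"

definition prodE :: "'k::one uexp list \<Rightarrow> 'k uexp" where
  "prodE xs = foldr Mul xs (Sc 1)"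

definition smul :: "'k \<Rightarrow> 'k uexp \<Rightarrow> 'k uexp" where
  "smul a x = Mul (Sc a) x"

fun usubst :: "(nat \<Rightarrow> gen \<Rightarrow> 'k uexp) \<Rightarrow> 'k uexp \<Rightarrow> 'k uexp" where
  "usubst \<sigma> (Sc a) = Sc a"
| "usubst \<sigma> (G i g) = \<sigma> i g"
| "usubst \<sigma> (Add x y) = Add (usubst \<sigma> x) (usubst \<sigma> y)"
| "usubst \<sigma> (Mul x y) = Mul (usubst \<sigma> x) (usubst \<sigma> y)"

text \<open>at_pos p phi x = (1^{(p-1)} (x) phi (x) 1^{...}) x, where phi p g is the image of
  generator g as an expression in slots p and p+1; slots after p are shifted by one.\<close>

definition at_pos :: "nat \<Rightarrow> (nat \<Rightarrow> gen \<Rightarrow> 'k uexp) \<Rightarrow> 'k uexp \<Rightarrow> 'k uexp" where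
  "at_pos p \<phi> = usubst (\<lambda>j g. if j < p then G j g else if j = p then \<phi> p g else G (Suc j) g)"

text \<open>1^{d} (x) - : shift all slots by d.\<close>

definition shiftE :: "nat \<Rightarrow> 'k uexp \<Rightarrow> 'k uexp" where
  "shiftE d = usubst (\<lambda>j g. G (j + d) g)"

text \<open>The image of each generator is written so that the second tensor factor of
  the image of an I_R generator lies in I_R and the first tensor factor of the image of an
  I_L generator lies in I_L.  For Lambda we use the identity
  Delta(Lambda) = Lambda (x) K^-1 + K (x) Lambda - (q+q^-1) K (x) K^-1
                  + (q-q^-1)^2 E (x) F + (q-q^-1)^2 q^-2 FK (x) EK^-1.\<close>

definition delta :: "'k::field \<Rightarrow> nat \<Rightarrow> gen \<Rightarrow> 'k uexp" where
  "delta q p g = (let c = (q - inverse q)^2 in case g of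
      GE \<Rightarrow> Add (G p GE) (Mul (G p GK) (G (p+1) GE))
    | GF \<Rightarrow> Add (Mul (G p GF) (G (p+1) GKi)) (G (p+1) GF)
    | GK \<Rightarrow> Mul (G p GK) (G (p+1) GK)
    | GKi \<Rightarrow> Mul (G p GKi) (G (p+1) GKi)
    | GEKi \<Rightarrow> Add (Mul (G p GEKi) (G (p+1) GKi)) (G (p+1) GEKi)
    | GFK \<Rightarrow> Add (G p GFK) (Mul (G p GK) (G (p+1) GFK))
    | GLam \<Rightarrow> sumE [ prodE [G p GLam, G (p+1) GKi],
                     prodE [G p GK, G (p+1) GLam],
                     smul (- (q + inverse q)) (prodE [G p GK, G (p+1) GKi]),
                     smul c (prodE [G p GE, G (p+1) GF]),
                     smul (c * inverse q ^ 2) (prodE [G p GFK, G (p+1) GEKi]) ])"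

text \<open>tau_R : I_R -> U (x) I_R on the generators of I_R (slot p = U, slot p+1 = I_R).
  It is only ever applied to slots whose content is written in the I_R generators;
  the value on other generators is irrelevant (set to 0).\<close>

definition tau_R :: "'k::field \<Rightarrow> nat \<Rightarrow> gen \<Rightarrow> 'k uexp" where
  "tau_R q p g = (let c = (q - inverse q)^2 in case g of
      GEKi \<Rightarrow> Mul (G p GKi) (G (p+1) GEKi)
    | GF \<Rightarrow> sumE [ prodE [G p GK, G (p+1) GF],
                   smul (- (inverse q ^ 3 * c)) (prodE [G p GF, G p GF, G p GK, G (p+1) GEKi]),
                   smul (inverse q * (q + inverse q)) (prodE [G p GF, G p GK, G (p+1) GKi]),
                   smul (- inverse q) (prodE [G p GF, G p GK, G (p+1) GLam]) ]
    | GKi \<Rightarrow> Add (G (p+1) GKi) (smul (- (inverse q * c)) (prodE [G p GF, G (p+1) GEKi]))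
    | GLam \<Rightarrow> G (p+1) GLam
    | _ \<Rightarrow> Sc 0)"

text \<open>tau_L : I_L -> I_L (x) U on the generators of I_L (slot p = I_L, slot p+1 = U).\<close>

definition tau_L :: "'k::field \<Rightarrow> nat \<Rightarrow> gen \<Rightarrow> 'k uexp" where
  "tau_L q p g = (let c = (q - inverse q)^2 in case g of
      GE \<Rightarrow> Mul (G p GE) (G (p+1) GK)
    | GFK \<Rightarrow> sumE [ prodE [G p GFK, G (p+1) GKi],
                    smul (- (inverse q * c)) (prodE [G p GE, G (p+1) GF, G (p+1) GF, G (p+1) GK]),
                    smul (q * (q + inverse q)) (prodE [G p GK, G (p+1) GF]),
                    smul (- q) (prodE [G p GLam, G (p+1) GF]) ]
    | GK \<Rightarrow> Add (G p GK) (smul (- (inverse q * c)) (prodE [G p GE, G (p+1) GFK]))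
    | GLam \<Rightarrow> G p GLam
    | _ \<Rightarrow> Sc 0)"

text \<open>Right extension: mu_i = (1^{a_i-a_1-1} (x) tau_R) o ... o (1^{a_{i-1}-a_1+1} (x) tau_R)
  o (1^{a_{i-1}-a_1} (x) Delta).\<close>

definition mu_R :: "'k::field \<Rightarrow> nat \<Rightarrow> nat \<Rightarrow> nat \<Rightarrow> 'k uexp \<Rightarrow> 'k uexp" where
  "mu_R q a1 aprev ai x =
     fold (\<lambda>j y. at_pos j (tau_R q) y) [aprev - a1 + 2 ..< ai - a1 + 1]
       (at_pos (aprev - a1 + 1) (delta q) x)"

definition LambdaR :: "'k::field \<Rightarrow> nat set \<Rightarrow> 'k uexp" where
  "LambdaR q A = (if A = {} then Sc (q + inverse q) else
     (let as = sorted_list_of_set A; m = length as; a1 = as ! 0 in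
      shiftE (a1 - 1)
        (fold (\<lambda>i x. mu_R q a1 (as ! (i - 2)) (as ! (i - 1)) x) [2 ..< m + 1] (G 1 GLam))))"

text \<open>Left extension: hat mu_i = (tau_L (x) 1^{a_m-a_i-1}) o ... o (tau_L (x) 1^{a_m-a_{i+1}+1})
  o (Delta (x) 1^{a_m-a_{i+1}}); all these act on the first slot.\<close>

definition mu_L :: "'k::field \<Rightarrow> nat \<Rightarrow> nat \<Rightarrow> nat \<Rightarrow> 'k uexp \<Rightarrow> 'k uexp" where
  "mu_L q am ai anext x =
     fold (\<lambda>k y. at_pos 1 (tau_L q) y) [am - anext + 1 ..< am - ai]
       (at_pos 1 (delta q) x)"

definition LambdaL :: "'k::field \<Rightarrow> nat set \<Rightarrow> 'k uexp" where
  "LambdaL q A = (if A = {} then Sc (q + inverse q) else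
     (let as = sorted_list_of_set A; m = length as; a1 = as ! 0; am = as ! (m - 1) in
      shiftE (a1 - 1)
        (fold (\<lambda>i x. mu_L q am (as ! (i - 1)) (as ! i) x) (rev [1 ..< m]) (G 1 GLam))))"

definition gen_val :: "'k::field \<Rightarrow> ('k \<Rightarrow> 'r::ring_1) \<Rightarrow> (nat \<Rightarrow> 'r) \<Rightarrow> (nat \<Rightarrow> 'r)
    \<Rightarrow> (nat \<Rightarrow> 'r) \<Rightarrow> (nat \<Rightarrow> 'r) \<Rightarrow> nat \<Rightarrow> gen \<Rightarrow> 'r" where
  "gen_val q sc E F K Ki i g = (case g of
      GE \<Rightarrow> E i | GF \<Rightarrow> F i | GK \<Rightarrow> K i | GKi \<Rightarrow> Ki i
    | GEKi \<Rightarrow> E i * Ki i | GFK \<Rightarrow> F i * K i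
    | GLam \<Rightarrow> sc ((q - inverse q)^2) * E i * F i + sc (inverse q) * K i + sc q * Ki i)"

fun ueval :: "('k \<Rightarrow> 'r::ring_1) \<Rightarrow> (nat \<Rightarrow> gen \<Rightarrow> 'r) \<Rightarrow> 'k uexp \<Rightarrow> 'r" where
  "ueval sc v (Sc a) = sc a"
| "ueval sc v (G i g) = v i g"
| "ueval sc v (Add x y) = ueval sc v x + ueval sc v y"
| "ueval sc v (Mul x y) = ueval sc v x * ueval sc v y"

definition central_alg_hom :: "('k::field \<Rightarrow> 'r::ring_1) \<Rightarrow> bool" where
  "central_alg_hom sc \<longleftrightarrow> (\<forall>a b. sc (a + b) = sc a + sc b) \<and> (\<forall>a b. sc (a * b) = sc a * sc b)
     \<and> sc 1 = 1 \<and> (\<forall>a x. sc a * x = x * sc a)"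

text \<open>n commuting copies of the defining relations of U_q(sl_2) inside R, i.e. an algebra
  morphism from U_q(sl_2)^{(x) n} to R (the tensor power is the universal such algebra).\<close>

definition Uq_tensor_rep :: "'k::field \<Rightarrow> ('k \<Rightarrow> 'r::ring_1) \<Rightarrow> (nat \<Rightarrow> 'r) \<Rightarrow> (nat \<Rightarrow> 'r)
    \<Rightarrow> (nat \<Rightarrow> 'r) \<Rightarrow> (nat \<Rightarrow> 'r) \<Rightarrow> nat \<Rightarrow> bool" where
  "Uq_tensor_rep q sc E F K Ki n \<longleftrightarrow>
     central_alg_hom sc \<and>
     (\<forall>i\<in>{1..n}. K i * Ki i = 1 \<and> Ki i * K i = 1
        \<and> K i * E i = sc (q ^ 2) * E i * K i
        \<and> K i * F i = sc (inverse q ^ 2) * F i * K i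
        \<and> E i * F i - F i * E i = sc (inverse (q - inverse q)) * (K i - Ki i)) \<and>
     (\<forall>i\<in>{1..n}. \<forall>j\<in>{1..n}. i \<noteq> j \<longrightarrow>
        (\<forall>x\<in>{E i, F i, K i, Ki i}. \<forall>y\<in>{E j, F j, K j, Ki j}. x * y = y * x))"

end

theory Submission
  imports Defs
begin
definition DV :: "('k::field \<Rightarrow> 'r::ring_1) \<Rightarrow> 'k \<Rightarrow> (gen \<Rightarrow> 'r) \<Rightarrow> (gen \<Rightarrow> 'r) \<Rightarrow> gen \<Rightarrow> 'r" where
  "DV sc q a b g = ueval sc (\<lambda>j. if j = 1 then a else b) (delta q 1 g)"
definition TRV :: "('k::field \<Rightarrow> 'r::ring_1) \<Rightarrow> 'k \<Rightarrow> (gen \<Rightarrow> 'r) \<Rightarrow> (gen \<Rightarrow> 'r) \<Rightarrow> gen \<Rightarrow> 'r" where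
  "TRV sc q a b g = ueval sc (\<lambda>j. if j = 1 then a else b) (tau_R q 1 g)"
definition TLV :: "('k::field \<Rightarrow> 'r::ring_1) \<Rightarrow> 'k \<Rightarrow> (gen \<Rightarrow> 'r) \<Rightarrow> (gen \<Rightarrow> 'r) \<Rightarrow> gen \<Rightarrow> 'r" where
  "TLV sc q a b g = ueval sc (\<lambda>j. if j = 1 then a else b) (tau_L q 1 g)"

lemma ueval_delta: "ueval sc v (delta q p g) = DV sc q (v p) (v (Suc p)) g"
  by (cases g) (simp_all add: DV_def delta_def sumE_def prodE_def smul_def Let_def)
lemma ueval_tau_R: "ueval sc v (tau_R q p g) = TRV sc q (v p) (v (Suc p)) g"
  by (cases g) (simp_all add: TRV_def tau_R_def sumE_def prodE_def smul_def Let_def)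
lemma ueval_tau_L: "ueval sc v (tau_L q p g) = TLV sc q (v p) (v (Suc p)) g"
  by (cases g) (simp_all add: TLV_def tau_L_def sumE_def prodE_def smul_def Let_def)

locale sch =
  fixes sc :: "'k::field \<Rightarrow> 'r::ring_1"
  assumes hom: "central_alg_hom sc"
begin
lemma sc_add: "sc (a + b) = sc a + sc b" using hom unfolding central_alg_hom_def by blast
lemma sc_mult: "sc (a * b) = sc a * sc b" using hom unfolding central_alg_hom_def by blast
lemma sc_one: "sc 1 = 1" using hom unfolding central_alg_hom_def by blast
lemma sc_central: "sc a * x = x * sc a" using hom unfolding central_alg_hom_def by blast
lemma sc_zero: "sc 0 = 0" using sc_add[of 0 0] by (metis add.right_neutral add_left_cancel)
lemma sc_minus: "sc (- a) = - sc a"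
proof -
  have "sc (-a) + sc a = 0" using sc_add[of "-a" a] sc_zero by simp
  then show ?thesis by (simp add: eq_neg_iff_add_eq_0)
qed
definition smult where "smult k x = sc k * x"
lemma to_sm: "sc k * x = smult k x" by (simp add: smult_def)
lemma sm1: "x * smult k y = smult k (x * y)"
proof -
  have "x * (sc k * y) = (x * sc k) * y" by (simp add: mult.assoc)
  also have "\<dots> = (sc k * x) * y" using sc_central[of k x] by simp
  finally show ?thesis by (simp add: smult_def mult.assoc)
qed
lemma sm2: "smult k x * y = smult k (x * y)" by (simp add: smult_def mult.assoc)
lemma sm3: "smult a (smult b y) = smult (a * b) y" by (simp add: smult_def sc_mult mult.assoc)
lemma sm4: "smult k (x + y) = smult k x + smult k y" by (simp add: smult_def distrib_left)
lemma sm5: "smult k (- x) = - smult k x" by (simp add: smult_def)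
lemma sm6: "smult k (x - y) = smult k x - smult k y" by (simp add: smult_def right_diff_distrib)
lemma sm7: "x * sc 1 = x" by (simp add: sc_one)
lemma sm8: "smult (-k) x = - smult k x" by (simp add: smult_def sc_minus)

lemmas nf = to_sm sm1 sm2 sm3 sm4 sm5 sm6 sm7 sm8 mult.assoc distrib_left distrib_right
   left_diff_distrib right_diff_distrib mult_minus_left mult_minus_right

lemma sm9: "smult 0 x = 0" by (simp add: smult_def sc_zero)
lemma sm10: "smult (a + b) x = smult a x + smult b x" by (simp add: smult_def sc_add distrib_right)
lemma sm11: "smult (a - b) x = smult a x - smult b x" using sm10[of a "-b" x] sm8[of b x] by simp

lemma I1: "DV sc q a (DV sc q b c) GLam = DV sc q (DV sc q a b) c GLam"
  apply (simp add: DV_def delta_def sumE_def prodE_def smul_def Let_def nf sc_zero sm9)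
  done

lemma I2g: assumes "b GFK = b GF * b GK" and iqd: "inverse q = iq" and cd: "(q - iq)^2 = cc" and qi: "q * iq = 1"
  shows "DV sc q a (TRV sc q b c) GLam = DV sc q (TLV sc q a b) c GLam"
proof -
  have qi2: "q * (iq * x) = x" "iq * q = 1" "iq * (q * x) = x" for x
    using qi by (simp_all add: mult.assoc[symmetric] mult.commute)
  show ?thesis
  apply (simp add: DV_def TRV_def TLV_def tau_R_def tau_L_def delta_def sumE_def prodE_def smul_def Let_def nf assms sc_zero sm9)
  apply (simp add: algebra_simps sm10 sm11 power2_eq_square power3_eq_cube qi qi2)
  apply (simp add: sm8)
  done
qed

lemma I2: assumes "b GFK = b GF * b GK" and "q \<noteq> 0"
  shows "DV sc q a (TRV sc q b c) GLam = DV sc q (TLV sc q a b) c GLam"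
  by (rule I2g[OF assms(1) refl refl]) (simp add: assms(2))
end

definition atv :: "nat \<Rightarrow> ((gen \<Rightarrow> 'r) \<Rightarrow> (gen \<Rightarrow> 'r) \<Rightarrow> gen \<Rightarrow> 'r) \<Rightarrow> (nat \<Rightarrow> gen \<Rightarrow> 'r) \<Rightarrow> nat \<Rightarrow> gen \<Rightarrow> 'r" where
  "atv p \<Phi> v = (\<lambda>j. if j < p then v j else if j = p then \<Phi> (v p) (v (Suc p)) else v (Suc j))"

lemma ueval_usubst: "ueval sc v (usubst \<sigma> x) = ueval sc (\<lambda>i g. ueval sc v (\<sigma> i g)) x"
  by (induction x) auto

lemma ueval_at_pos:
  assumes "\<And>g. ueval sc v (\<phi> p g) = \<Phi> (v p) (v (Suc p)) g"
  shows "ueval sc v (at_pos p \<phi> x) = ueval sc (atv p \<Phi> v) x"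
  unfolding at_pos_def ueval_usubst
  apply (rule arg_cong[where f="\<lambda>w. ueval sc w x"])
  apply (auto simp: atv_def fun_eq_iff assms)
  done

lemma ueval_at_delta: "ueval sc v (at_pos p (delta q) x) = ueval sc (atv p (DV sc q) v) x"
  by (rule ueval_at_pos) (rule ueval_delta)
lemma ueval_at_tau_R: "ueval sc v (at_pos p (tau_R q) x) = ueval sc (atv p (TRV sc q) v) x"
  by (rule ueval_at_pos) (rule ueval_tau_R)
lemma ueval_at_tau_L: "ueval sc v (at_pos p (tau_L q) x) = ueval sc (atv p (TLV sc q) v) x"
  by (rule ueval_at_pos) (rule ueval_tau_L)

lemma ueval_fold:
  assumes "\<And>j w y. j \<in> set js \<Longrightarrow> ueval sc w (F j y) = ueval sc (W j w) y"
  shows "ueval sc v (fold F js y) = ueval sc (foldr W js v) y"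
  using assms by (induction js arbitrary: v y) auto

lemma ueval_shift: "ueval sc v (shiftE d x) = ueval sc (\<lambda>j. v (j + d)) x"
  by (simp add: shiftE_def ueval_usubst)

definition TRs where "TRs T p g v = foldr (\<lambda>j. atv j T) [Suc p..<Suc p + g] v"
definition XW where "XW D T p g v = atv p D (TRs T p g v)"
definition TLn where "TLn T h v = (atv 1 T ^^ h) v"
definition YW where "YW D T h v = atv 1 D (TLn T h v)"

lemma comm1: "2 \<le> p \<Longrightarrow> atv 1 \<psi> (atv (Suc p) \<phi> v) = atv p \<phi> (atv 1 \<psi> v)"
  by (auto simp: atv_def fun_eq_iff)

lemma TLn_0[simp]: "TLn T 0 v = v" by (simp add: TLn_def)
lemma TLn_Suc: "TLn T (Suc h) v = atv 1 T (TLn T h v)" by (simp add: TLn_def)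
lemma TRs_0[simp]: "TRs T p 0 v = v" by (simp add: TRs_def)
lemma TRs_Suc: "TRs T p (Suc g) v = TRs T p g (atv (Suc p + g) T v)"
  by (simp add: TRs_def)

lemma TLn_atv: "2 \<le> p \<Longrightarrow> TLn \<psi> h (atv (p + h) \<phi> v) = atv p \<phi> (TLn \<psi> h v)"
proof (induction h arbitrary: p)
  case 0 then show ?case by simp
next
  case (Suc h)
  have "TLn \<psi> (Suc h) (atv (p + Suc h) \<phi> v) = atv 1 \<psi> (TLn \<psi> h (atv (Suc p + h) \<phi> v))"
    by (simp add: TLn_Suc)
  also have "\<dots> = atv 1 \<psi> (atv (Suc p) \<phi> (TLn \<psi> h v))" using Suc.IH[of "Suc p"] Suc.prems by simp
  also have "\<dots> = atv p \<phi> (atv 1 \<psi> (TLn \<psi> h v))" using Suc.prems by (rule comm1)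
  finally show ?case by (simp add: TLn_Suc)
qed

lemma TLn_TRs: "1 \<le> p \<Longrightarrow> TLn \<psi> h (TRs T (p + h) g v) = TRs T p g (TLn \<psi> h v)"
proof (induction g arbitrary: v)
  case 0 then show ?case by simp
next
  case (Suc g)
  have "TLn \<psi> h (TRs T (p + h) (Suc g) v) = TLn \<psi> h (TRs T (p + h) g (atv ((Suc p + g) + h) T v))"
    by (simp add: TRs_Suc algebra_simps)
  also have "\<dots> = TRs T p g (TLn \<psi> h (atv ((Suc p + g) + h) T v))" using Suc by simp
  also have "\<dots> = TRs T p g (atv (Suc p + g) T (TLn \<psi> h v))"
    using Suc.prems by (subst TLn_atv) auto
  finally show ?case by (simp add: TRs_Suc)
qed

lemma TRs_atv1: "1 \<le> p \<Longrightarrow> TRs T p g (atv 1 \<psi> z) = atv 1 \<psi> (TRs T (Suc p) g z)"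
proof (induction g arbitrary: z)
  case 0 then show ?case by simp
next
  case (Suc g)
  have "TRs T p (Suc g) (atv 1 \<psi> z) = TRs T p g (atv (Suc p + g) T (atv 1 \<psi> z))"
    by (simp add: TRs_Suc)
  also have "\<dots> = TRs T p g (atv 1 \<psi> (atv (Suc (Suc p + g)) T z))"
    using Suc.prems by (subst comm1) auto
  also have "\<dots> = atv 1 \<psi> (TRs T (Suc p) g (atv (Suc (Suc p + g)) T z))" using Suc by simp
  finally show ?case by (simp add: TRs_Suc)
qed

lemma TRs_low: "j \<le> p \<Longrightarrow> TRs T p g v j = v j"
  by (induction g arbitrary: v) (auto simp: TRs_Suc atv_def)

lemma TLn_high: "2 \<le> j \<Longrightarrow> TLn T h v j = v (j + h)"
  by (induction h arbitrary: j) (auto simp: TLn_Suc atv_def)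

lemma YW_high: "2 \<le> j \<Longrightarrow> YW D T h v j = v (j + h + 1)"
  by (simp add: YW_def atv_def TLn_high)

lemma XW_low: "j < p \<Longrightarrow> XW D T p g v j = v j"
  by (simp add: XW_def atv_def TRs_low)

lemma YX: "2 \<le> p \<Longrightarrow> YW D TL h (XW D TR (p + h + 1) g v) = XW D TR p g (YW D TL h v)"
proof -
  assume p: "2 \<le> p"
  have "YW D TL h (XW D TR (p + h + 1) g v) = atv 1 D (TLn TL h (atv (Suc p + h) D (TRs TR (Suc p + h) g v)))"
    by (simp add: YW_def XW_def)
  also have "\<dots> = atv 1 D (atv (Suc p) D (TLn TL h (TRs TR (Suc p + h) g v)))"
    using p by (subst TLn_atv) auto
  also have "\<dots> = atv 1 D (atv (Suc p) D (TRs TR (Suc p) g (TLn TL h v)))"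
    by (subst TLn_TRs) auto
  also have "\<dots> = atv p D (atv 1 D (TRs TR (Suc p) g (TLn TL h v)))"
    using p by (rule comm1)
  also have "\<dots> = atv p D (TRs TR p g (atv 1 D (TLn TL h v)))"
    using p by (subst TRs_atv1) auto
  finally show ?thesis by (simp add: YW_def XW_def)
qed

fun RVa where
  "RVa D T p [] v = v"
| "RVa D T p (g # gs) v = XW D T p g (RVa D T (p + Suc g) gs v)"

lemma RVa_snoc: "RVa D T p (gs @ [g]) v = RVa D T p gs (XW D T (p + sum_list (map Suc gs)) g v)"
  by (induction gs arbitrary: p) (auto simp: add.assoc)

definition NN :: "nat list \<Rightarrow> nat" where "NN gs = Suc (sum_list (map Suc gs))"

definition fk :: "(gen \<Rightarrow> 'r::ring_1) \<Rightarrow> bool" where "fk u \<longleftrightarrow> u GFK = u GF * u GK"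

context sch
begin

lemma lemA:
  assumes q: "q \<noteq> 0"
  shows "(\<And>j. 2 \<le> j \<Longrightarrow> j < g + 2 \<Longrightarrow> fk (v j)) \<Longrightarrow>
     XW (DV sc q) (TRV sc q) 1 g v 1 GLam = YW (DV sc q) (TLV sc q) g v 1 GLam"
proof (induction g arbitrary: v)
  case 0 then show ?case by (simp add: XW_def YW_def)
next
  case (Suc g)
  let ?D = "DV sc q" and ?R = "TRV sc q" and ?L = "TLV sc q"
  define v' where "v' = atv (Suc (Suc g)) ?R v"
  have xw: "XW ?D ?R 1 (Suc g) v = XW ?D ?R 1 g v'"
    by (simp add: XW_def TRs_Suc v'_def)
  define w where "w = TLn ?L g v"
  have "XW ?D ?R 1 (Suc g) v 1 GLam = XW ?D ?R 1 g v' 1 GLam" using xw by simp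
  also have "\<dots> = YW ?D ?L g v' 1 GLam"
    using Suc.IH[of v'] Suc.prems by (simp add: v'_def atv_def)
  also have "YW ?D ?L g v' = atv 1 ?D (atv 2 ?R w)"
    unfolding YW_def v'_def w_def using TLn_atv[of 2 ?L g ?R v] by simp
  also have "atv 1 ?D (atv 2 ?R w) 1 GLam = ?D (w 1) (?R (w 2) (w 3)) GLam"
    by (simp add: atv_def)
  also have "\<dots> = ?D (?L (w 1) (w 2)) (w 3) GLam"
  proof (rule I2[OF _ q])
    show "w 2 GFK = w 2 GF * w 2 GK"
      using Suc.prems[of "2 + g"] TLn_high[of 2 ?L g v] by (simp add: w_def fk_def)
  qed
  also have "\<dots> = YW ?D ?L (Suc g) v 1 GLam"
    by (simp add: YW_def TLn_Suc atv_def w_def numeral_2_eq_2 eval_nat_numeral)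
  finally show ?case .
qed

lemma lemC:
  "YW (DV sc q) (TLV sc q) h (XW (DV sc q) (TRV sc q) (Suc (Suc h)) g v) 1 GLam
   = XW (DV sc q) (TRV sc q) 1 g (YW (DV sc q) (TLV sc q) h v) 1 GLam"
proof -
  let ?D = "DV sc q" and ?R = "TRV sc q" and ?L = "TLV sc q"
  define w where "w = TRs ?R 2 g (TLn ?L h v)"
  have "YW ?D ?L h (XW ?D ?R (Suc (Suc h)) g v) = atv 1 ?D (TLn ?L h (atv (2 + h) ?D (TRs ?R (2 + h) g v)))"
    by (simp add: YW_def XW_def)
  also have "\<dots> = atv 1 ?D (atv 2 ?D (TLn ?L h (TRs ?R (2 + h) g v)))"
    by (subst TLn_atv) auto
  also have "\<dots> = atv 1 ?D (atv 2 ?D w)"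
    unfolding w_def by (subst TLn_TRs) auto
  finally have L: "YW ?D ?L h (XW ?D ?R (Suc (Suc h)) g v) = atv 1 ?D (atv 2 ?D w)" .
  have R: "XW ?D ?R 1 g (YW ?D ?L h v) = atv 1 ?D (atv 1 ?D w)"
    unfolding XW_def YW_def w_def by (subst TRs_atv1) (auto simp: numeral_2_eq_2)
  show ?thesis unfolding L R by (simp add: atv_def I1 numeral_2_eq_2 eval_nat_numeral)
qed
end

context sch
begin

lemma lemB:
  assumes q: "q \<noteq> 0"
  shows "(\<And>j. 2 \<le> j \<Longrightarrow> j < NN (gs @ [g]) \<Longrightarrow> fk (v j)) \<Longrightarrow>
    fold (YW (DV sc q) (TLV sc q)) gs (XW (DV sc q) (TRV sc q) (NN gs) g v) 1 GLam
    = YW (DV sc q) (TLV sc q) g (fold (YW (DV sc q) (TLV sc q)) gs v) 1 GLam"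
proof (induction gs arbitrary: v)
  case Nil
  then show ?case using lemA[OF q, of g v] by (simp add: NN_def)
next
  case (Cons h gs)
  let ?D = "DV sc q" and ?R = "TRV sc q" and ?L = "TLV sc q"
  show ?case
  proof (cases "gs = []")
    case True
    have "YW ?D ?L h (XW ?D ?R (Suc (Suc h)) g v) 1 GLam = XW ?D ?R 1 g (YW ?D ?L h v) 1 GLam"
      by (rule lemC)
    also have "\<dots> = YW ?D ?L g (YW ?D ?L h v) 1 GLam"
    proof (rule lemA[OF q])
      fix j assume "2 \<le> j" "j < g + 2"
      then show "fk (YW ?D ?L h v j)" using Cons.prems[of "j + h + 1"] True
        by (simp add: YW_high NN_def)
    qed
    finally show ?thesis using True by (simp add: NN_def)
  next
    case False
    have p2: "2 \<le> NN gs" using False by (cases gs) (auto simp: NN_def)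
    have yx: "YW ?D ?L h (XW ?D ?R (NN (h # gs)) g v) = XW ?D ?R (NN gs) g (YW ?D ?L h v)"
      using YX[OF p2, of ?D ?L h ?R g v] by (simp add: NN_def add_ac)
    have "fold (YW ?D ?L) gs (XW ?D ?R (NN gs) g (YW ?D ?L h v)) 1 GLam
        = YW ?D ?L g (fold (YW ?D ?L) gs (YW ?D ?L h v)) 1 GLam"
    proof (rule Cons.IH)
      fix j assume "2 \<le> j" "j < NN (gs @ [g])"
      then show "fk (YW ?D ?L h v j)" using Cons.prems[of "j + h + 1"]
        by (simp add: YW_high NN_def)
    qed
    then show ?thesis using yx by simp
  qed
qed

lemma lemMain:
  assumes q: "q \<noteq> 0"
  shows "(\<And>j. 2 \<le> j \<Longrightarrow> j < NN gl \<Longrightarrow> fk (v j)) \<Longrightarrow>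
    RVa (DV sc q) (TRV sc q) 1 gl v 1 GLam = fold (YW (DV sc q) (TLV sc q)) gl v 1 GLam"
proof (induction gl arbitrary: v rule: rev_induct)
  case Nil then show ?case by simp
next
  case (snoc g gs)
  let ?D = "DV sc q" and ?R = "TRV sc q" and ?L = "TLV sc q"
  have "RVa ?D ?R 1 (gs @ [g]) v 1 GLam = RVa ?D ?R 1 gs (XW ?D ?R (NN gs) g v) 1 GLam"
    by (simp add: RVa_snoc NN_def)
  also have "\<dots> = fold (YW ?D ?L) gs (XW ?D ?R (NN gs) g v) 1 GLam"
  proof (rule snoc.IH)
    fix j assume j: "2 \<le> j" "j < NN gs"
    then have "j < NN (gs @ [g])" by (simp add: NN_def)
    then show "fk (XW ?D ?R (NN gs) g v j)" using snoc.prems[of j] j by (simp add: XW_low)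
  qed
  also have "\<dots> = YW ?D ?L g (fold (YW ?D ?L) gs v) 1 GLam"
    by (rule lemB[OF q]) (rule snoc.prems)
  finally show ?case by simp
qed
end

fun gaps :: "nat list \<Rightarrow> nat list" where
  "gaps (x # y # r) = (y - x - 1) # gaps (y # r)"
| "gaps _ = []"

lemma nth_Cons_ge2: "2 \<le> i \<Longrightarrow> (x # xs) ! (i - 1) = xs ! (i - 2)"
  by (cases i) (auto simp: nth_Cons')

lemma nth_Cons_ge1: "1 \<le> i \<Longrightarrow> (x # xs) ! i = xs ! (i - 1)"
  by (cases i) auto

lemma R_conn:
  "sorted_wrt (<) xs \<Longrightarrow> xs \<noteq> [] \<Longrightarrow> b \<le> hd xs \<Longrightarrow>
   foldr (\<lambda>i. XW D T (xs!(i-2) - b + 1) (xs!(i-1) - xs!(i-2) - 1)) [2..<length xs + 1] w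
   = RVa D T (hd xs - b + 1) (gaps xs) w"
proof (induction xs rule: gaps.induct)
  case (1 x y r)
  have xy: "x < y" using "1.prems"(1) by simp
  have up: "[2..<length (x # y # r) + 1] = 2 # map Suc [2..<length (y # r) + 1]"
    by (subst upt_conv_Cons) (auto simp: map_Suc_upt)
  have cong: "foldr ((\<lambda>i. XW D T ((x # y # r)!(i-2) - b + 1) ((x # y # r)!(i-1) - (x # y # r)!(i-2) - 1)) \<circ> Suc)
      [2..<length (y # r) + 1] w
    = foldr (\<lambda>i. XW D T ((y # r)!(i-2) - b + 1) ((y # r)!(i-1) - (y # r)!(i-2) - 1)) [2..<length (y # r) + 1] w"
  proof (rule foldr_cong)
    fix i acc assume "i \<in> set [2..<length (y # r) + 1]"
    then have i: "2 \<le> i" by (simp del: upt_Suc)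
    have e1: "(x # y # r) ! (Suc i - 2) = (y # r) ! (i - 2)"
      using i by (cases i) (auto simp: nth_Cons')
    have e2: "(x # y # r) ! (Suc i - 1) = (y # r) ! (i - 1)"
      using i by (cases i) auto
    show "((\<lambda>i. XW D T ((x # y # r)!(i-2) - b + 1) ((x # y # r)!(i-1) - (x # y # r)!(i-2) - 1)) \<circ> Suc) i acc
      = (\<lambda>i. XW D T ((y # r)!(i-2) - b + 1) ((y # r)!(i-1) - (y # r)!(i-2) - 1)) i acc"
      by (simp only: comp_def e1 e2)
  qed auto
  have ih: "foldr (\<lambda>i. XW D T ((y # r)!(i-2) - b + 1) ((y # r)!(i-1) - (y # r)!(i-2) - 1)) [2..<length (y # r) + 1] w
     = RVa D T (y - b + 1) (gaps (y # r)) w"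
    using "1.IH" "1.prems" xy by simp
  have ar: "x - b + 1 + Suc (y - x - 1) = y - b + 1" using xy "1.prems"(3) by simp
  show ?case
    unfolding up foldr.simps foldr_map
    using cong ih ar xy "1.prems"(3) by (simp add: o_def Suc_diff_Suc)
qed auto

lemma L_conn:
  "fold (\<lambda>i. YW D T (xs!i - xs!(i-1) - 1)) [1..<length xs] w = fold (YW D T) (gaps xs) w"
proof (induction xs arbitrary: w rule: gaps.induct)
  case (1 x y r)
  have up: "[1..<length (x # y # r)] = 1 # map Suc [1..<length (y # r)]"
    by (subst upt_conv_Cons) (auto simp: map_Suc_upt)
  have cong: "\<And>w. fold ((\<lambda>i. YW D T ((x # y # r)!i - (x # y # r)!(i-1) - 1)) \<circ> Suc) [1..<length (y # r)] w
    = fold (\<lambda>i. YW D T ((y # r)!i - (y # r)!(i-1) - 1)) [1..<length (y # r)] w"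
  proof (rule fold_cong)
    fix i assume "i \<in> set [1..<length (y # r)]"
    then have i: "1 \<le> i" by (simp del: upt_Suc)
    show "((\<lambda>i. YW D T ((x # y # r)!i - (x # y # r)!(i-1) - 1)) \<circ> Suc) i
      = (\<lambda>i. YW D T ((y # r)!i - (y # r)!(i-1) - 1)) i"
      using i by (cases i) auto
  qed auto
  show ?case
    unfolding up fold_Cons fold_map
    using cong "1.IH" by (simp add: o_def)
qed auto

lemma funpow_foldr: "foldr (\<lambda>_. f) xs v = (f ^^ length xs) v"
  by (induction xs) auto

lemma mu_R_eval:
  assumes "a1 \<le> ap" "ap < ai"
  shows "ueval sc w (mu_R q a1 ap ai y) = ueval sc (XW (DV sc q) (TRV sc q) (ap - a1 + 1) (ai - ap - 1) w) y"
proof -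
  have "ueval sc w (mu_R q a1 ap ai y) = ueval sc (foldr (\<lambda>j. atv j (TRV sc q)) [ap - a1 + 2..<ai - a1 + 1] w)
        (at_pos (ap - a1 + 1) (delta q) y)"
    unfolding mu_R_def by (rule ueval_fold) (rule ueval_at_tau_R)
  also have "\<dots> = ueval sc (atv (ap - a1 + 1) (DV sc q) (foldr (\<lambda>j. atv j (TRV sc q)) [ap - a1 + 2..<ai - a1 + 1] w)) y"
    by (rule ueval_at_delta)
  also have "[ap - a1 + 2..<ai - a1 + 1] = [Suc (ap - a1 + 1)..<Suc (ap - a1 + 1) + (ai - ap - 1)]"
    by (rule arg_cong2[where f=upt]) (use assms in auto)
  finally show ?thesis by (simp add: XW_def TRs_def)
qed

lemma mu_L_eval:
  assumes "ai < an" "an \<le> am"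
  shows "ueval sc w (mu_L q am ai an y) = ueval sc (YW (DV sc q) (TLV sc q) (an - ai - 1) w) y"
proof -
  have "ueval sc w (mu_L q am ai an y) = ueval sc (foldr (\<lambda>k. atv 1 (TLV sc q)) [am - an + 1..<am - ai] w)
        (at_pos 1 (delta q) y)"
    unfolding mu_L_def by (rule ueval_fold) (rule ueval_at_tau_L)
  also have "\<dots> = ueval sc (atv 1 (DV sc q) (foldr (\<lambda>k. atv 1 (TLV sc q)) [am - an + 1..<am - ai] w)) y"
    by (rule ueval_at_delta)
  moreover have "length [am - an + 1..<am - ai] = an - ai - 1" using assms by simp
  ultimately show ?thesis by (simp add: YW_def TLn_def funpow_foldr)
qed

lemma sorted_le: "sorted_wrt (<) (xs::nat list) \<Longrightarrow> i \<le> j \<Longrightarrow> j < length xs \<Longrightarrow> xs ! i \<le> xs ! j"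
  using sorted_wrt_nth_less[of "(<)" xs i j] by (cases "i = j") auto


theorem proposition2p12:
  fixes q :: "'k::field" and sc :: "'k \<Rightarrow> 'r::ring_1"
    and E F K Ki :: "nat \<Rightarrow> 'r" and n :: nat and A :: "nat set"
  assumes "q \<noteq> 0" and "\<forall>m::nat. m > 0 \<longrightarrow> q ^ m \<noteq> 1"
    and "n \<ge> 1" and "A \<subseteq> {1..n}"
    and "Uq_tensor_rep q sc E F K Ki n"
  shows "ueval sc (gen_val q sc E F K Ki) (LambdaR q A)
       = ueval sc (gen_val q sc E F K Ki) (LambdaL q A)"
proof -
  have hom: "central_alg_hom sc" using assms(5) by (simp add: Uq_tensor_rep_def)
  interpret sch sc by (rule sch.intro) (rule hom)
  show ?thesis
  proof (cases "A = {}")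
    case True then show ?thesis by (simp add: LambdaR_def LambdaL_def)
  next
    case False
    let ?v = "gen_val q sc E F K Ki"
    let ?D = "DV sc q" and ?R = "TRV sc q" and ?L = "TLV sc q"
    define as where "as = sorted_list_of_set A"
    have fin: "finite A" using assms(4) finite_subset by blast
    have srt: "sorted_wrt (<) as" unfolding as_def by (rule strict_sorted_list_of_set)
    have ne: "as \<noteq> []" using False fin by (simp add: as_def)
    have hd0: "hd as = as ! 0" using ne by (simp add: hd_conv_nth)
    define v0 where "v0 = (\<lambda>j. ?v (j + (as ! 0 - 1)))"
    have LR: "LambdaR q A = shiftE (as!0 - 1) (fold (\<lambda>i x. mu_R q (as!0) (as!(i-2)) (as!(i-1)) x) [2..<length as + 1] (G 1 GLam))"
      using False by (simp add: LambdaR_def as_def Let_def)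
    have LL: "LambdaL q A = shiftE (as!0 - 1) (fold (\<lambda>i x. mu_L q (as!(length as - 1)) (as!(i-1)) (as!i) x) (rev [1..<length as]) (G 1 GLam))"
      using False by (simp add: LambdaL_def as_def Let_def)
    have "ueval sc ?v (LambdaR q A) = ueval sc v0 (fold (\<lambda>i x. mu_R q (as!0) (as!(i-2)) (as!(i-1)) x) [2..<length as + 1] (G 1 GLam))"
      unfolding LR ueval_shift v0_def by simp
    also have "\<dots> = ueval sc (foldr (\<lambda>i. XW ?D ?R (as!(i-2) - as!0 + 1) (as!(i-1) - as!(i-2) - 1)) [2..<length as + 1] v0) (G 1 GLam)"
    proof (rule ueval_fold)
      fix j w y assume "j \<in> set [2..<length as + 1]"
      then have j: "2 \<le> j" "j \<le> length as" by (auto simp del: upt_Suc)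
      have "as!0 \<le> as!(j-2)" by (rule sorted_le[OF srt]) (use j in auto)
      moreover have "as!(j-2) < as!(j-1)" using sorted_wrt_nth_less[OF srt, of "j-2" "j-1"] j by auto
      ultimately show "ueval sc w (mu_R q (as!0) (as!(j-2)) (as!(j-1)) y)
          = ueval sc (XW ?D ?R (as!(j-2) - as!0 + 1) (as!(j-1) - as!(j-2) - 1) w) y"
        by (rule mu_R_eval)
    qed
    also have "\<dots> = RVa ?D ?R 1 (gaps as) v0 1 GLam"
      using R_conn[OF srt ne, of "as!0" ?D ?R v0] hd0 by simp
    finally have R1: "ueval sc ?v (LambdaR q A) = RVa ?D ?R 1 (gaps as) v0 1 GLam" .
    have "ueval sc ?v (LambdaL q A) = ueval sc v0 (fold (\<lambda>i x. mu_L q (as!(length as - 1)) (as!(i-1)) (as!i) x) (rev [1..<length as]) (G 1 GLam))"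
      unfolding LL ueval_shift v0_def by simp
    also have "\<dots> = ueval sc (foldr (\<lambda>i. YW ?D ?L (as!i - as!(i-1) - 1)) (rev [1..<length as]) v0) (G 1 GLam)"
    proof (rule ueval_fold)
      fix j w y assume "j \<in> set (rev [1..<length as])"
      then have j: "1 \<le> j" "j < length as" by (auto simp del: upt_Suc)
      have "as!(j-1) < as!j" using sorted_wrt_nth_less[OF srt, of "j-1" j] j by auto
      moreover have "as!j \<le> as!(length as - 1)" by (rule sorted_le[OF srt]) (use j in auto)
      ultimately show "ueval sc w (mu_L q (as!(length as - 1)) (as!(j-1)) (as!j) y)
          = ueval sc (YW ?D ?L (as!j - as!(j-1) - 1) w) y"
        by (rule mu_L_eval)
    qed
    also have "\<dots> = fold (YW ?D ?L) (gaps as) v0 1 GLam"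
      using L_conn[of ?D ?L as v0] by (simp add: foldr_conv_fold)
    finally have L1: "ueval sc ?v (LambdaL q A) = fold (YW ?D ?L) (gaps as) v0 1 GLam" .
    have "RVa ?D ?R 1 (gaps as) v0 1 GLam = fold (YW ?D ?L) (gaps as) v0 1 GLam"
      by (rule lemMain[OF assms(1)]) (simp add: v0_def fk_def gen_val_def)
    then show ?thesis using R1 L1 by simp
  qed
qed

end
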